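(* For all $V,W\in\mathcal G(s,d)$ and all $S\in\mathbb R^{d\times d}$ with $SV\in\mathcal G(s,d)$ (i.e. $\dim SV=s$), $$|\angle(SV,W)-\angle(V,W)|\le C\|S-I_d\|,\qquad C=\frac{\pi}{2}+\Big(\frac{\pi^2}{4}+1\Big)^{1/2}.$$
   Context: $\mathcal G(s,d)$ is the Grassmannian of $s$-dimensional subspaces of $\mathbb R^d$ and $\|\cdot\|$ is the spectral norm. For $V,W\in\mathcal G(s,d)$ choose $P,Q\in\mathbb R^{d\times s}$ with orthonormal columns spanning $V$ and $W$; the principal angles $0\le\phi_1\le\dots\le\phi_s\le\pi/2$ are defined by $\cos\phi_j=\sigma_j$ where $\sigma_1\ge\dots\ge\sigma_s\ge0$ are the singular values of $P^\top Q$, and $\angle(V,W):=\phi_s$ is the maximal principal angle. *)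

theory Defs
  imports "HOL-Analysis.Analysis"
begin

text \<open>Grassmannian G(s,d): s-dimensional linear subspaces of R^d.
  Dimensions are types: d = CARD('n), s = CARD('s).\<close>
definition grassmannian :: "'s::finite itself \<Rightarrow> (real^'n) set set" where
  "grassmannian _ = {V. subspace V \<and> dim V = CARD('s)}"

text \<open>P (a d x s matrix) has orthonormal columns spanning V.\<close>
definition onb_matrix :: "(real^'n) set \<Rightarrow> real^'s^'n \<Rightarrow> bool" where
  "onb_matrix V P \<longleftrightarrow> transpose P ** P = mat 1 \<and> span (columns P) = V"

text \<open>Smallest singular value sigma_s of a square s x s matrix
  (variational form: min over unit vectors of |Mx|).\<close>
definition smin :: "real^'s^'s \<Rightarrow> real" where
  "smin M = Inf {norm (M *v x) | x. norm x = 1}"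

text \<open>Maximal principal angle phi_s = arccos sigma_s(P^T Q).\<close>
definition max_angle :: "'s::finite itself \<Rightarrow> (real^'n) set \<Rightarrow> (real^'n) set \<Rightarrow> real" where
  "max_angle _ V W =
     (let P = (SOME P :: real^'s^'n. onb_matrix V P);
          Q = (SOME Q :: real^'s^'n. onb_matrix W Q)
      in arccos (smin (transpose P ** Q)))"

end

theory Submission
  imports Defs
begin


lemma onb_exists:
  assumes "U \<in> grassmannian TYPE('s::finite)"
  shows "\<exists>P::real^'s^'n. onb_matrix U P"
proof -
  from assms have sub: "subspace U" and dU: "dim U = CARD('s)" by (auto simp: grassmannian_def)
  obtain B where B: "B \<subseteq> U" "pairwise orthogonal B" "\<And>x. x \<in> B \<Longrightarrow> norm x = 1"
     "independent B" "card B = dim U" "span B = U"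
    using orthonormal_basis_subspace[OF sub] by blast
  have fin: "finite B" using B(4) independent_imp_finite by blast
  obtain f where f: "bij_betw f (UNIV::'s set) B"
    using finite_same_card_bij[of "UNIV::'s set" B] fin B(5) dU by auto
  define P where "P = (\<chi> i j. f j $ i :: real^'s^'n)"
  have col: "column j P = f j" for j by (simp add: P_def column_def vec_eq_iff)
  have cols: "columns P = B"
    using f by (auto simp: columns_def col bij_betw_def)
  have ip: "inner (f i) (f j) = (if i = j then 1 else 0)" for i j
  proof (cases "i = j")
    case True
    then show ?thesis using B(3)[of "f j"] f by (auto simp: norm_eq_1 bij_betw_def)
  next
    case False
    then have "f i \<noteq> f j" using f by (auto simp: bij_betw_def inj_on_def)
    then show ?thesis using B(2) f False unfolding pairwise_def orthogonal_def bij_betw_def by auto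
  qed
  have "transpose P ** P = mat 1"
    unfolding matrix_mult_transpose_dot_column col
    by (simp add: vec_eq_iff mat_def ip)
  then show ?thesis using cols B(6) unfolding onb_matrix_def by blast
qed

lemma onb_adj:
  fixes P :: "real^'s^'n"
  shows "inner (P *v x) w = inner x (transpose P *v w)"
  by (metis dot_lmul_matrix inner_commute transpose_matrix_vector)

lemma onb_isom:
  fixes P :: "real^'s^'n"
  assumes "onb_matrix U P"
  shows "norm (P *v x) = norm x"
proof -
  have "inner (P *v x) (P *v x) = inner x x"
    using assms by (simp add: onb_adj matrix_vector_mul_assoc onb_matrix_def)
  then show ?thesis by (simp add: norm_eq_sqrt_inner)
qed

lemma onb_in:
  fixes P :: "real^'s^'n"
  assumes "onb_matrix U P"
  shows "P *v x \<in> U"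
proof -
  have "P *v x = (\<Sum>i\<in>UNIV. x$i *\<^sub>R column i P)"
    by (simp add: matrix_mult_sum scalar_mult_eq_scaleR)
  also have "\<dots> \<in> span (columns P)"
    by (intro span_sum span_scale span_base) (auto simp: columns_def)
  finally show ?thesis using assms by (simp add: onb_matrix_def)
qed

lemma onb_proj:
  fixes P :: "real^'s^'n"
  assumes "onb_matrix U P" "u \<in> U"
  shows "P *v (transpose P *v u) = u"
proof -
  have "u \<in> span (columns P)" using assms by (simp add: onb_matrix_def)
  then show ?thesis
  proof (induct rule: span_induct)
    case base
    show ?case unfolding subspace_def
      by (auto simp del: transpose_matrix_vector simp add: matrix_vector_right_distrib matrix_vector_mult_scaleR)
  next
    case (step x)
    then obtain j where x: "x = column j P" by (auto simp: columns_def)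
    have "x = P *v axis j 1"
      unfolding x by (simp add: column_def matrix_vector_mult_def axis_def vec_eq_iff if_distrib cong: if_cong)
    then have "transpose P *v x = axis j 1"
      using assms(1) by (simp add: matrix_vector_mul_assoc onb_matrix_def)
    then show ?case using \<open>x = P *v axis j 1\<close> by simp
  qed
qed



lemma sin_lower:
  fixes t :: real
  assumes "0 \<le> t" "t \<le> 1/2"
  shows "95/100 * t \<le> sin t"
proof -
  have b: "\<bar>sin t - (\<Sum>m<4. sin_coeff m * t ^ m)\<bar> \<le> inverse (fact 4) * \<bar>t\<bar> ^ 4"
    by (rule Maclaurin_sin_bound)
  have eq: "(\<Sum>m<4. sin_coeff m * t ^ m) = t - t^3/6"
    by (simp add: sin_coeff_def lessThan_nat_numeral fact_numeral)
  have e2: "inverse (fact 4) * \<bar>t\<bar> ^ 4 = t^4/24"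
  proof -
    have "fact 4 = (24::real)" by (simp add: fact_numeral)
    then show ?thesis using assms by simp
  qed
  have s: "sin t \<ge> t - t^3/6 - t^4/24"
    using b unfolding eq e2 by linarith
  have t1: "t \<le> (1/2)" using assms by simp
  have "t * t \<le> (1/2) * (1/2)" using t1 assms by (intro mult_mono) auto
  then have t2: "t^2 \<le> (1/4)" by (simp add: power2_eq_square)
  have "t * t^2 \<le> (1/2) * (1/4)" using t1 t2 assms by (intro mult_mono) auto
  then have t3: "t^3 \<le> (1/8)" by (simp add: power3_eq_cube power2_eq_square)
  have a1: "t^3 \<le> (1/4) * t"
  proof -
    have "t * t^2 \<le> t * (1/4)" using t2 assms by (intro mult_left_mono) auto
    then show ?thesis by (simp add: power3_eq_cube power2_eq_square mult.commute)
  qed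
  have a2: "t^4 \<le> (1/8) * t"
  proof -
    have "t * t^3 \<le> t * (1/8)" using t3 assms by (intro mult_left_mono) auto
    then show ?thesis by (simp add: eval_nat_numeral mult.commute mult.left_commute)
  qed
  have "t^3/6 + t^4/24 \<le> t/20" using a1 a2 assms by linarith
  with s show ?thesis by linarith
qed

lemma arccos_tri:
  fixes x y z :: "'a::real_inner"
  assumes "norm x = 1" "norm y = 1" "norm z = 1"
  shows "arccos (inner x z) \<le> arccos (inner x y) + arccos (inner y z)"
proof -
  define a where "a = inner x y"
  define b where "b = inner y z"
  have ab: "\<bar>a\<bar> \<le> 1" "\<bar>b\<bar> \<le> 1"
    unfolding a_def b_def using Cauchy_Schwarz_ineq2[of x y] Cauchy_Schwarz_ineq2[of y z] assms by auto
  have xz: "\<bar>inner x z\<bar> \<le> 1" using Cauchy_Schwarz_ineq2[of x z] assms by auto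
  have yy: "inner y y = 1" "inner x x = 1" "inner z z = 1" using assms by (simp_all add: norm_eq_1)
  show ?thesis
  proof (cases "arccos a + arccos b \<le> pi")
    case False
    have "arccos (inner x z) \<le> pi" using xz by (intro arccos_ubound) auto
    then show ?thesis using False by (simp add: a_def b_def)
  next
    case True
    have n1: "inner (x - a *\<^sub>R y) (x - a *\<^sub>R y) = 1 - a^2"
      using yy by (simp add: inner_diff_left inner_diff_right a_def inner_commute power2_eq_square)
    have n2: "inner (z - b *\<^sub>R y) (z - b *\<^sub>R y) = 1 - b^2"
      using yy by (simp add: inner_diff_left inner_diff_right b_def inner_commute power2_eq_square)
    have i: "inner (x - a *\<^sub>R y) (z - b *\<^sub>R y) = inner x z - a * b"
      using yy by (simp add: inner_diff_left inner_diff_right a_def b_def inner_commute)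
    have "\<bar>inner (x - a *\<^sub>R y) (z - b *\<^sub>R y)\<bar> \<le> norm (x - a *\<^sub>R y) * norm (z - b *\<^sub>R y)"
      by (rule Cauchy_Schwarz_ineq2)
    also have "\<dots> = sqrt (1 - a^2) * sqrt (1 - b^2)"
      by (simp add: norm_eq_sqrt_inner n1 n2)
    finally have ge: "inner x z \<ge> a * b - sqrt (1 - a^2) * sqrt (1 - b^2)" using i by linarith
    have c: "cos (arccos a + arccos b) = a * b - sqrt (1 - a^2) * sqrt (1 - b^2)"
      using ab by (simp add: cos_add sin_arccos)
    have "arccos (inner x z) \<le> arccos (cos (arccos a + arccos b))"
      using ge c xz cos_ge_minus_one[of "arccos a + arccos b"] by (intro arccos_le_arccos) auto
    also have "\<dots> = arccos a + arccos b"
      using True ab by (intro arccos_cos) (auto intro!: add_nonneg_nonneg arccos_lbound)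
    finally show ?thesis by (simp add: a_def b_def)
  qed
qed



lemma pert:
  fixes S :: "real^'n^'n" and v :: "real^'n"
  assumes hS: "\<And>x. norm (S *v x - x) \<le> e * norm x" and e: "0 \<le> e" "e \<le> 46/100" and v: "v \<noteq> 0"
  shows "S *v v \<noteq> 0"
    "arccos (inner ((1/norm v) *\<^sub>R v) ((1/norm (S *v v)) *\<^sub>R (S *v v))) \<le> 3 * e"
proof -
  define nv where "nv = norm v"
  have nv: "nv > 0" using v by (simp add: nv_def)
  define vh where "vh = (1/nv) *\<^sub>R v"
  define y where "y = (1/nv) *\<^sub>R (S *v v)"
  have vh1: "norm vh = 1" using nv by (simp add: vh_def nv_def)
  have "y - vh = (1/nv) *\<^sub>R (S *v v - v)" by (simp add: y_def vh_def algebra_simps)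
  then have "norm (y - vh) = norm (S *v v - v) / nv" using nv by simp
  also have "\<dots> \<le> e * nv / nv" using hS[of v] nv by (intro divide_right_mono) (auto simp: nv_def)
  finally have yv: "norm (y - vh) \<le> e" using nv by simp
  have ny1: "norm y \<ge> 1 - e" and ny2: "norm y \<le> 1 + e"
    using yv vh1 norm_triangle_ineq2[of y vh] norm_triangle_ineq3[of y vh]
    by (smt (verit) norm_minus_commute norm_triangle_ineq)+
  then have ypos: "norm y > 0" using e by linarith
  have Sv: "S *v v = nv *\<^sub>R y" using nv by (simp add: y_def)
  show "S *v v \<noteq> 0" using ypos nv Sv by auto
  define sh where "sh = (1/norm y) *\<^sub>R y"
  have sh_eq: "(1/norm (S *v v)) *\<^sub>R (S *v v) = sh"
    using nv ypos by (simp add: Sv sh_def)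
  have sh1: "norm sh = 1" using ypos by (simp add: sh_def)
  have "sh - y = (1/norm y - 1) *\<^sub>R y" by (simp add: sh_def algebra_simps)
  then have "norm (sh - y) = \<bar>1/norm y - 1\<bar> * norm y" by simp
  also have "\<dots> = \<bar>1 - norm y\<bar>" using ypos by (simp add: abs_mult_pos' field_simps abs_minus_commute)
  finally have shy: "norm (sh - y) \<le> e" using ny1 ny2 by linarith
  define d where "d = norm (vh - sh)"
  have d: "d \<le> 2 * e" unfolding d_def using yv shy norm_triangle_ineq[of "vh - y" "y - sh"]
    by (simp add: norm_minus_commute)
  have d0: "d \<ge> 0" by (simp add: d_def)
  have "d^2 = inner (vh - sh) (vh - sh)" by (simp add: d_def dot_square_norm)
  also have "\<dots> = 2 - 2 * inner vh sh"
    using vh1 sh1 by (simp add: inner_diff_left inner_diff_right inner_commute norm_eq_1)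
  finally have c: "inner vh sh = 1 - d^2/2" by linarith
  define c where "c = inner vh sh"
  have cb: "-1 \<le> c" "c \<le> 1" using Cauchy_Schwarz_ineq2[of vh sh] vh1 sh1 by (auto simp: c_def)
  define th where "th = arccos c"
  have th: "0 \<le> th" "th \<le> pi" "cos th = c" using cb by (auto simp: th_def arccos_lbound arccos_ubound)
  define t where "t = th / 2"
  have t: "0 \<le> t" "t \<le> pi/2" using th by (auto simp: t_def)
  have "cos th = 1 - 2 * sin t ^ 2" using cos_double_sin[of t] by (simp add: t_def)
  then have "sin t ^ 2 = (d/2)^2" using th(3) c by (simp add: c_def power_divide)
  moreover have "sin t \<ge> 0" using t by (intro sin_ge_zero) auto
  ultimately have st: "sin t = d/2" using d0
    by (metis divide_nonneg_nonneg power2_eq_iff_nonneg zero_le_numeral)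
  have t6: "t \<le> 1/2"
  proof (rule ccontr)
    assume "\<not> t \<le> 1/2"
    then have "sin (1/2) \<le> sin t" using t pi_ge_two by (intro sin_monotone_2pi_le) auto
    moreover have "95/100 * (1/2) \<le> sin (1/2::real)" by (rule sin_lower) auto
    ultimately show False using st d e by simp
  qed
  have "95/100 * t \<le> sin t" using sin_lower t t6 by blast
  then have "th \<le> 3 * e" using st d e by (simp add: t_def)
  then show "arccos (inner ((1/norm v) *\<^sub>R v) ((1/norm (S *v v)) *\<^sub>R (S *v v))) \<le> 3 * e"
    by (simp add: sh_eq th_def c_def vh_def nv_def)
qed

lemma onb_ub:
  fixes P :: "real^'s^'n"
  assumes "onb_matrix U P" "u \<in> U"
  shows "inner u w \<le> norm (transpose P *v w) * norm u"
proof -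
  have "inner u w = inner (transpose P *v u) (transpose P *v w)"
    using onb_adj[of P "transpose P *v u" w] onb_proj[OF assms] by simp
  also have "\<dots> \<le> norm (transpose P *v u) * norm (transpose P *v w)" by (rule norm_cauchy_schwarz)
  also have "norm (transpose P *v u) = norm u"
    using onb_isom[OF assms(1), of "transpose P *v u"] onb_proj[OF assms] by simp
  finally show ?thesis by (simp add: mult.commute)
qed

lemma onb_att:
  fixes P :: "real^'s^'n"
  assumes "onb_matrix U P"
  obtains u where "u \<in> U" "norm u = 1" "inner u w = norm (transpose P *v w)"
proof -
  define y where "y = transpose P *v w"
  obtain x :: "real^'s" where x: "norm x = 1" "inner x y = norm y"
  proof (cases "y = 0")
    case True then show ?thesis using that[of "axis undefined 1"] by simp
  next
    case False then show ?thesis using that[of "(1/norm y) *\<^sub>R y"]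
      by (simp add: dot_square_norm power2_eq_square)
  qed
  then show ?thesis using that[of "P *v x"] onb_in[OF assms] onb_isom[OF assms] onb_adj[of P x w]
    by (simp add: y_def)
qed

lemma onb_le1:
  fixes P :: "real^'s^'n"
  assumes "onb_matrix U P" "norm w = 1"
  shows "norm (transpose P *v w) \<le> 1"
proof -
  obtain u where "u \<in> U" "norm u = 1" "inner u w = norm (transpose P *v w)"
    using onb_att[OF assms(1)] by blast
  then show ?thesis using norm_cauchy_schwarz[of u w] assms by simp
qed



lemma keyK:
  fixes S :: "real^'n^'n" and P P' :: "real^'s^'n"
  assumes V: "subspace V" and P: "onb_matrix V P" and P': "onb_matrix ((*v) S ` V) P'"
    and hS: "\<And>x. norm (S *v x - x) \<le> e * norm x" and e: "0 \<le> e" "e \<le> 46/100"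
    and w: "norm w = 1"
  shows "arccos (norm (transpose P' *v w)) \<le> arccos (norm (transpose P *v w)) + 3 * e"
    "arccos (norm (transpose P *v w)) \<le> arccos (norm (transpose P' *v w)) + 3 * e"
proof -
  have cb: "norm (transpose P *v w) \<le> 1" "norm (transpose P' *v w) \<le> 1"
    using onb_le1[OF P w] onb_le1[OF P' w] by auto
  have ib: "-1 \<le> inner a w" if "norm a = 1" for a :: "real^'n"
    using Cauchy_Schwarz_ineq2[of a w] that w by auto
  show "arccos (norm (transpose P' *v w)) \<le> arccos (norm (transpose P *v w)) + 3 * e"
  proof -
    obtain v where v: "v \<in> V" "norm v = 1" "inner v w = norm (transpose P *v w)"
      using onb_att[OF P] by blast
    have v0: "v \<noteq> 0" using v by auto
    note pv = pert[OF hS e v0]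
    define sh where "sh = (1/norm (S *v v)) *\<^sub>R (S *v v)"
    have sh1: "norm sh = 1" using pv(1) by (simp add: sh_def)
    have shU: "sh \<in> (*v) S ` V"
      unfolding sh_def using V v(1)
      by (intro image_eqI[of _ _ "(1/norm (S *v v)) *\<^sub>R v"]) (auto simp: matrix_vector_mult_scaleR subspace_scale)
    have "inner sh w \<le> norm (transpose P' *v w)"
      using onb_ub[OF P' shU, of w] sh1 by simp
    then have a1: "arccos (norm (transpose P' *v w)) \<le> arccos (inner sh w)"
      using cb ib[OF sh1] by (intro arccos_le_arccos) auto
    have a2: "arccos (inner sh w) \<le> arccos (inner sh v) + arccos (inner v w)"
      using arccos_tri[OF sh1 v(2) w] .
    have a3: "arccos (inner sh v) \<le> 3 * e"
      using pv(2) v(2) by (simp add: sh_def inner_commute)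
    have a4: "arccos (inner v w) = arccos (norm (transpose P *v w))" using v(3) by simp
    show ?thesis using a1 a2 a3 a4 by linarith
  qed
  show "arccos (norm (transpose P *v w)) \<le> arccos (norm (transpose P' *v w)) + 3 * e"
  proof -
    obtain u where u: "u \<in> (*v) S ` V" "norm u = 1" "inner u w = norm (transpose P' *v w)"
      using onb_att[OF P'] by blast
    then obtain v0 where v0: "v0 \<in> V" "u = S *v v0" by blast
    have v00: "v0 \<noteq> 0" using u v0 by auto
    note pv = pert[OF hS e v00]
    define vh where "vh = (1/norm v0) *\<^sub>R v0"
    have vh1: "norm vh = 1" using v00 by (simp add: vh_def)
    have vhV: "vh \<in> V" using V v0 by (simp add: vh_def subspace_scale)
    have ueq: "(1/norm (S *v v0)) *\<^sub>R (S *v v0) = u" using u v0 by simp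
    have "inner vh w \<le> norm (transpose P *v w)"
      using onb_ub[OF P vhV, of w] vh1 by simp
    then have a1: "arccos (norm (transpose P *v w)) \<le> arccos (inner vh w)"
      using cb ib[OF vh1] by (intro arccos_le_arccos) auto
    have a2: "arccos (inner vh w) \<le> arccos (inner vh u) + arccos (inner u w)"
      using arccos_tri[OF vh1 u(2) w] .
    have a3: "arccos (inner vh u) \<le> 3 * e"
      using pv(2) unfolding ueq vh_def .
    have a4: "arccos (inner u w) = arccos (norm (transpose P' *v w))" using u(3) by simp
    show ?thesis using a1 a2 a3 a4 by linarith
  qed
qed

lemma inf_arccos:
  fixes f g :: "'a \<Rightarrow> real"
  assumes D: "D \<noteq> {}" and f: "\<forall>x\<in>D. 0 \<le> f x \<and> f x \<le> 1" and g: "\<forall>x\<in>D. 0 \<le> g x \<and> g x \<le> 1"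
    and fg: "\<forall>x\<in>D. arccos (f x) \<le> arccos (g x) + d" and d: "0 \<le> d"
  shows "arccos (Inf (f ` D)) \<le> arccos (Inf (g ` D)) + d"
proof -
  have bf: "bdd_below (f ` D)" "bdd_below (g ` D)" using f g by (auto intro!: bdd_belowI[of _ 0])
  have mf: "0 \<le> Inf (f ` D)" "Inf (f ` D) \<le> 1"
    using D f cInf_greatest[of "f ` D" 0] cInf_lower[OF _ bf(1)] by (auto, fastforce)
  have mg: "0 \<le> Inf (g ` D)" "Inf (g ` D) \<le> 1"
    using D g cInf_greatest[of "g ` D" 0] cInf_lower[OF _ bf(2)] by (auto, fastforce)
  define t where "t = arccos (Inf (g ` D)) + d"
  show ?thesis
  proof (cases "t \<ge> pi/2")
    case True
    have "arccos (Inf (f ` D)) \<le> pi/2" using mf by (intro arccos_le_pi2) auto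
    then show ?thesis using True by (simp add: t_def)
  next
    case False
    have t0: "0 \<le> t" using mg d by (simp add: t_def arccos_lbound)
    have "cos t \<le> f x" if x: "x \<in> D" for x
    proof -
      have "Inf (g ` D) \<le> g x" using cInf_lower[OF _ bf(2)] x by auto
      then have "arccos (g x) \<le> arccos (Inf (g ` D))" using g x mg by (intro arccos_le_arccos) auto
      then have a: "arccos (f x) \<le> t" using fg x by (auto simp: t_def)
      have "0 \<le> arccos (f x)" using f x by (intro arccos_lbound) auto
      then have "cos t \<le> cos (arccos (f x))"
        using a False by (intro cos_monotone_0_pi_le) auto
      moreover have fx: "-1 \<le> f x" "f x \<le> 1" using f x by auto
      ultimately show ?thesis using cos_arccos[OF fx] by simp
    qed
    then have "cos t \<le> Inf (f ` D)" using D by (intro cInf_greatest) auto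
    then have "arccos (Inf (f ` D)) \<le> arccos (cos t)"
      using mf t0 False cos_ge_minus_one[of t] by (intro arccos_le_arccos) auto
    also have "\<dots> = t" using t0 False by (intro arccos_cos) auto
    finally show ?thesis by (simp add: t_def)
  qed
qed



lemma inf01:
  fixes f :: "'a \<Rightarrow> real"
  assumes D: "D \<noteq> {}" and f: "\<forall>x\<in>D. 0 \<le> f x \<and> f x \<le> 1"
  shows "0 \<le> arccos (Inf (f ` D))" "arccos (Inf (f ` D)) \<le> pi/2"
proof -
  have bf: "bdd_below (f ` D)" using f by (auto intro!: bdd_belowI[of _ 0])
  have mf: "0 \<le> Inf (f ` D)" "Inf (f ` D) \<le> 1"
    using D f cInf_greatest[of "f ` D" 0] cInf_lower[OF _ bf] by (auto, fastforce)
  show "0 \<le> arccos (Inf (f ` D))" using mf by (intro arccos_lbound) auto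
  show "arccos (Inf (f ` D)) \<le> pi/2" using mf by (intro arccos_le_pi2) auto
qed

theorem lemma3p3:
  fixes V W :: "(real^'n) set" and S :: "real^'n^'n"
  assumes "V \<in> grassmannian TYPE('s::finite)"
      and "W \<in> grassmannian TYPE('s)"
      and "((*v) S) ` V \<in> grassmannian TYPE('s)"
  shows "\<bar>max_angle TYPE('s) (((*v) S) ` V) W - max_angle TYPE('s) V W\<bar>
           \<le> (pi / 2 + sqrt (pi\<^sup>2 / 4 + 1)) * onorm ((*v) (S - mat 1))"
proof -
  define K where "K = pi / 2 + sqrt (pi\<^sup>2 / 4 + 1)"
  define e where "e = onorm ((*v) (S - mat 1))"
  have hS: "norm (S *v x - x) \<le> e * norm x" for x
    using onorm[OF matrix_vector_mul_bounded_linear[of "S - mat 1"], of x]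
    by (simp add: e_def matrix_vector_mult_diff_rdistrib)
  have e0: "0 \<le> e" unfolding e_def by (intro onorm_pos_le) simp
  have "(185/100)^2 \<le> pi\<^sup>2 / 4 + 1"
  proof -
    have p: "3141/1000 \<le> pi" using pi_approx by simp
    have "(3141/1000) * (3141/1000) \<le> pi * pi" using p by (intro mult_mono) auto
    then have "98658/10000 \<le> pi^2" by (simp add: power2_eq_square)
    then show ?thesis by (simp add: power2_eq_square)
  qed
  then have "185/100 \<le> sqrt (pi\<^sup>2 / 4 + 1)" by (rule real_le_rsqrt)
  then have K: "K \<ge> 342/100" using pi_approx by (simp add: K_def)
  have Vs: "subspace V" using assms(1) by (simp add: grassmannian_def)
  define P where "P = (SOME P :: real^'s^'n. onb_matrix V P)"
  define Q where "Q = (SOME P :: real^'s^'n. onb_matrix W P)"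
  define P' where "P' = (SOME P :: real^'s^'n. onb_matrix ((*v) S ` V) P)"
  have P: "onb_matrix V P" using someI_ex[OF onb_exists[OF assms(1)]] by (simp add: P_def)
  have Q: "onb_matrix W Q" using someI_ex[OF onb_exists[OF assms(2)]] by (simp add: Q_def)
  have P': "onb_matrix ((*v) S ` V) P'" using someI_ex[OF onb_exists[OF assms(3)]] by (simp add: P'_def)
  define D where "D = {x :: real^'s. norm x = 1}"
  have D: "D \<noteq> {}" unfolding D_def using norm_axis_1 by blast
  define f where "f = (\<lambda>x. norm ((transpose P ** Q) *v x))"
  define g where "g = (\<lambda>x. norm ((transpose P' ** Q) *v x))"
  have a1: "max_angle TYPE('s) V W = arccos (Inf (f ` D))"
    unfolding max_angle_def smin_def Let_def P_def Q_def f_def D_def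
    by (simp only: setcompr_eq_image)
  have a2: "max_angle TYPE('s) ((*v) S ` V) W = arccos (Inf (g ` D))"
    unfolding max_angle_def smin_def Let_def P'_def Q_def g_def D_def
    by (simp only: setcompr_eq_image)
  have fw: "f x = norm (transpose P *v (Q *v x))" "g x = norm (transpose P' *v (Q *v x))" for x
    by (simp_all add: f_def g_def matrix_vector_mul_assoc)
  have nw: "norm (Q *v x) = 1" if "x \<in> D" for x
    using onb_isom[OF Q, of x] that by (simp add: D_def)
  have fb: "\<forall>x\<in>D. 0 \<le> f x \<and> f x \<le> 1" using onb_le1[OF P nw] by (simp add: fw)
  have gb: "\<forall>x\<in>D. 0 \<le> g x \<and> g x \<le> 1" using onb_le1[OF P' nw] by (simp add: fw)
  show ?thesis
  proof (cases "K * e \<ge> pi/2")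
    case True
    then show ?thesis unfolding a1 a2 K_def[symmetric] e_def[symmetric]
      using inf01[OF D fb] inf01[OF D gb] by linarith
  next
    case False
    have e1: "e \<le> 46/100"
    proof (rule ccontr)
      assume "\<not> e \<le> 46/100"
      then have "K * (46/100) \<le> K * e" using K by (intro mult_left_mono) auto
      then have "46/100 * K \<le> K * e" by (simp add: mult.commute)
      moreover have "pi \<le> 31416/10000" using pi_approx by simp
      ultimately show False using False K by linarith
    qed
    have k1: "\<forall>x\<in>D. arccos (g x) \<le> arccos (f x) + 3 * e"
      using keyK(1)[OF Vs P P' hS e0 e1 nw] by (simp add: fw)
    have k2: "\<forall>x\<in>D. arccos (f x) \<le> arccos (g x) + 3 * e"
      using keyK(2)[OF Vs P P' hS e0 e1 nw] by (simp add: fw)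
    have "3 * e \<le> K * e" using K e0 by (intro mult_right_mono) auto
    then show ?thesis unfolding a1 a2 K_def[symmetric] e_def[symmetric]
      using inf_arccos[OF D gb fb k1] inf_arccos[OF D fb gb k2] e0 by linarith
  qed
qed

end
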